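(* Let $l\in\mathbb N$, let $V_{l+1}=\{v_1,\dots,v_{l+1}\}$, and let $A$ be the adjacency matrix of a balanced tree $T\in\mathcal T_{V_{l+1}}$. Then the number of balanced trees $G\in\mathcal T_{V_{l+1}}$ with adjacency matrix $A(G)=A$ equals $$2l\prod_{i=1}^{l+1}(\operatorname{indeg}_T(v_i)-1)!.$$
   Context: For a finite ordered vertex set $V$ and $N\ge1$, a route through $V$ of length $N$ is a sequence $\mathbf i\in V^N$ whose set of entries equals $V$; its circuit multigraph $G_{\mathbf i}$ has vertex set $V$ and edges $1,\dots,N$ (own identity; parallel edges and loops allowed), edge $k<N$ from $i_k$ to $i_{k+1}$ and edge $N$ from $i_N$ to $i_1$; $\mathcal C_{V,N}$ is the set of all such graphs, and $G_{\mathbf i}$ is identified with its route $\mathbf i$ (so distinct routes give distinct graphs). A directed multigraph is balanced if its edges split into pairs $(e,e')$ with the head of $e$ equal to the tail of $e'$ and vice versa. $\mathcal T_{V_{l+1}}$ is the set of balanced $G\in\mathcal C_{V_{l+1},2l}$ (balanced trees). The adjacency matrix $A(G)$ has entry $A(G)_{v,w}$ equal to the number of edges from $v$ to $w$; $\operatorname{indeg}_T(v)$ is the number of edges with head $v$. *)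

theory Defs
  imports Main
begin

text \<open>A route through V of length N: a list of length N (N \<ge> 1) whose set of entries is V.
  Edges are indexed 0..N-1; edge k goes from entry k to entry (k+1) mod N.\<close>

definition is_route :: "'a set \<Rightarrow> nat \<Rightarrow> 'a list \<Rightarrow> bool" where
  "is_route V N xs \<longleftrightarrow> N \<ge> 1 \<and> length xs = N \<and> set xs = V"

definition circuit_graphs :: "'a set \<Rightarrow> nat \<Rightarrow> 'a list set" where
  "circuit_graphs V N = {xs. is_route V N xs}"

definition etail :: "'a list \<Rightarrow> nat \<Rightarrow> 'a" where
  "etail xs k = xs ! k"

definition ehead :: "'a list \<Rightarrow> nat \<Rightarrow> 'a" where
  "ehead xs k = xs ! (Suc k mod length xs)"

text \<open>Balanced: the edge set splits into pairs (e,e') of distinct edges with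
  head e = tail e' and tail e = head e'; encoded as a fixed-point-free involution on the edges.\<close>

definition balanced :: "'a list \<Rightarrow> bool" where
  "balanced xs \<longleftrightarrow> (\<exists>\<sigma>::nat \<Rightarrow> nat. \<forall>k < length xs.
      \<sigma> k < length xs \<and> \<sigma> k \<noteq> k \<and> \<sigma> (\<sigma> k) = k \<and>
      ehead xs k = etail xs (\<sigma> k) \<and> etail xs k = ehead xs (\<sigma> k))"

definition balanced_trees :: "'a set \<Rightarrow> nat \<Rightarrow> 'a list set" where
  "balanced_trees V l = {G \<in> circuit_graphs V (2 * l). balanced G}"

definition adj :: "'a list \<Rightarrow> 'a \<Rightarrow> 'a \<Rightarrow> nat" where
  "adj G v w = card {k. k < length G \<and> etail G k = v \<and> ehead G k = w}"

definition indeg :: "'a list \<Rightarrow> 'a \<Rightarrow> nat" where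
  "indeg G v = card {k. k < length G \<and> ehead G k = v}"

end

theory Submission
  imports Defs "HOL-Library.Multiset"
begin


definition E :: "'a list \<Rightarrow> ('a \<times> 'a) multiset" where
  "E G = mset (zip G (rotate1 G))"

definition cp :: "'a list \<Rightarrow> ('a \<times> 'a) multiset" where
  "cp L = mset (zip L (tl L))"

lemma cp_split: "cp (xs @ y # ys) = cp (xs @ [y]) + cp (y # ys)"
  unfolding cp_def by (induction xs rule: induct_list012) auto

lemma mset_rotate1 [simp]: "mset (rotate1 xs) = mset xs"
  by (cases xs) auto

lemma E_Cons: "E (x # xs) = cp (x # xs @ [x])"
proof -
  have "zip (x # xs @ [x]) (xs @ [x]) = zip (x # xs) (xs @ [x])"
    using zip_append1[of "x # xs" "[x]" "xs @ [x]"] by simp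
  then show ?thesis unfolding E_def cp_def by simp
qed

lemma E_nonempty: "G \<noteq> [] \<Longrightarrow> E G = cp (G @ [hd G])"
  by (cases G) (auto simp: E_Cons)

lemma cp_three: "cp [p,w,p] = {#(p,w),(w,p)#}"
  unfolding cp_def by simp

lemma E_ins:
  assumes "a @ b \<noteq> []" "hd (b @ a) = p"
  shows "E (a @ p # w # b) = E (a @ b) + {#(p,w),(w,p)#}"
proof (cases b)
  case Nil
  then obtain a' where a: "a = p # a'" using assms by (cases a) auto
  have "E (a @ p # w # b) = cp (p # a' @ p # [w, p])" using Nil a by (simp add: E_Cons)
  also have "\<dots> = cp (p # a' @ [p]) + cp [p,w,p]" by (metis append_Cons cp_split)
  finally show ?thesis using Nil a by (simp add: E_Cons cp_three)
next
  case (Cons b0 b')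
  then have b0: "b0 = p" using assms by simp
  define h where "h = hd (a @ [p])"
  have "E (a @ p # w # b) = cp (a @ p # w # p # b' @ [h])"
    using Cons b0 by (simp add: E_nonempty h_def hd_append)
  also have "\<dots> = cp (a @ [p]) + cp (p # w # p # b' @ [h])" by (rule cp_split)
  also have "cp (p # w # p # b' @ [h]) = cp [p,w,p] + cp (p # b' @ [h])"
    using cp_split[of "[p,w]" p "b' @ [h]"] by simp
  finally have 1: "E (a @ p # w # b) = cp (a @ [p]) + cp [p,w,p] + cp (p # b' @ [h])" by simp
  have "E (a @ b) = cp (a @ p # b' @ [h])"
    using Cons b0 by (simp add: E_nonempty h_def hd_append)
  also have "\<dots> = cp (a @ [p]) + cp (p # b' @ [h])" by (rule cp_split)
  finally show ?thesis using 1 by (simp add: cp_three add_ac)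
qed

lemma fst_E: "image_mset fst (E G) = mset G"
  unfolding E_def by (simp flip: mset_map)

lemma snd_E: "image_mset snd (E G) = mset G"
  unfolding E_def by (simp flip: mset_map)

lemma size_E: "size (E G) = length G"
  unfolding E_def by simp

lemma zip_rotate1: "length xs = length ys \<Longrightarrow> zip (rotate1 xs) (rotate1 ys) = rotate1 (zip xs ys)"
  by (cases xs; cases ys) auto

lemma E_rotate1: "E (rotate1 G) = E G"
  unfolding E_def by (simp add: zip_rotate1)

lemma adj_E: "adj G u v = count (E G) (u, v)"
proof -
  have "count (E G) (u,v) = length (filter ((=) (u,v)) (zip G (rotate1 G)))"
    unfolding E_def by (simp add: count_mset count_list_eq_length_filter)
  also have "\<dots> = card {k. k < length G \<and> (u,v) = zip G (rotate1 G) ! k}"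
    by (simp add: length_filter_conv_card)
  also have "\<dots> = adj G u v"
    unfolding adj_def etail_def ehead_def
    by (rule arg_cong[where f=card]) (auto simp: nth_rotate1)
  finally show ?thesis by simp
qed

lemma indeg_count: "indeg G v = count (mset G) v"
proof -
  have "count (mset G) v = length (filter ((=) v) (rotate1 G))"
    by (metis mset_rotate1 count_mset count_list_eq_length_filter)
  also have "\<dots> = card {k. k < length G \<and> v = rotate1 G ! k}"
    by (simp add: length_filter_conv_card)
  also have "\<dots> = indeg G v"
    unfolding indeg_def ehead_def
    by (rule arg_cong[where f=card]) (auto simp: nth_rotate1)
  finally show ?thesis by simp
qed

lemma image_two_le:
  assumes "x \<in># M" "y \<in># M" "x \<noteq> y" "f x = f y"
  shows "2 \<le> count (image_mset f M) (f x)"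
proof -
  obtain M1 where M1: "M = add_mset x M1" by (metis insert_DiffM assms(1))
  have "y \<in># M1" using assms(2,3) M1 by auto
  then obtain M2 where "M1 = add_mset y M2" by (metis insert_DiffM)
  then show ?thesis using M1 assms(4) by simp
qed

lemma remove_leaf:
  assumes EG: "E G = M' + {#(p,w),(w,p)#}" and cw: "count (mset G) w = 1"
    and hw: "hd G \<noteq> w" and len: "length G \<ge> 3"
  shows "\<exists>a b. G = a @ p # w # b \<and> a @ b \<noteq> [] \<and> hd (b @ a) = p \<and> E (a @ b) = M' \<and> hd (a @ b) = hd G"
proof -
  have "w \<in> set G" using cw by (metis count_mset_0_iff one_neq_zero set_mset_mset)
  then obtain xs ys where G: "G = xs @ w # ys" and wxs: "w \<notin> set xs"
    using split_list_first by metis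
  have "count (mset ys) w = 0" using cw G by simp
  then have wys: "w \<notin> set ys" by (simp add: count_mset_0_iff)
  have xsne: "xs \<noteq> []" using hw G by auto
  have hdG: "hd G = hd xs" using G xsne by simp
  obtain q rest where qr: "ys @ [hd xs] = q # rest" by (cases "ys @ [hd xs]") auto
  have EG2: "E G = cp (xs @ [w]) + cp (w # ys @ [hd xs])"
  proof -
    have "E G = cp (xs @ w # ys @ [hd xs])" using G hdG E_nonempty[of G] by simp
    then show ?thesis using cp_split[of xs w "ys @ [hd xs]"] by simp
  qed
  have xs_eq: "xs @ [w] = butlast xs @ last xs # [w]" using xsne by simp
  have "cp (xs @ [w]) = cp (butlast xs @ [last xs]) + cp [last xs, w]"
    unfolding xs_eq by (rule cp_split)
  moreover have "(last xs, w) \<in># cp [last xs, w]" by (simp add: cp_def)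
  ultimately have e1: "(last xs, w) \<in># E G" using EG2 by simp
  have "(w, q) \<in># cp (w # q # rest)" by (simp add: cp_def)
  then have e2: "(w, q) \<in># E G" using EG2 qr by simp
  have pw: "(p, w) \<in># E G" "(w, p) \<in># E G" using EG by auto
  have cs: "count (image_mset snd (E G)) w = 1" using cw by (simp add: snd_E)
  have cf: "count (image_mset fst (E G)) w = 1" using cw by (simp add: fst_E)
  have p: "last xs = p"
  proof (rule ccontr)
    assume "last xs \<noteq> p"
    then have "2 \<le> count (image_mset snd (E G)) w"
      using image_two_le[OF e1 pw(1), of snd] by simp
    then show False using cs by simp
  qed
  have q: "q = p"
  proof (rule ccontr)
    assume "q \<noteq> p"
    then have "2 \<le> count (image_mset fst (E G)) w"
      using image_two_le[OF e2 pw(2), of fst] by simp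
    then show False using cf by simp
  qed
  define a where "a = butlast xs"
  have "xs = butlast xs @ [last xs]" using xsne by simp
  then have "xs = a @ [p]" using p a_def by simp
  then have Ga: "G = a @ p # w # ys" using G by simp
  have "length G = length (a @ ys) + 2" using Ga by simp
  then have abne: "a @ ys \<noteq> []" using len by auto
  have hdb: "a \<noteq> [] \<Longrightarrow> hd a = hd xs" unfolding a_def
    by (metis append_butlast_last_id hd_append2 xsne)
  have hd1: "hd (ys @ a) = p"
  proof (cases ys)
    case Nil
    then have "hd xs = p" using qr q by simp
    moreover have "a \<noteq> []" using abne Nil by simp
    ultimately show ?thesis using Nil hdb by simp
  next
    case (Cons y ys')
    then show ?thesis using qr q by simp
  qed
  have "E G = E (a @ ys) + {#(p,w),(w,p)#}" by (subst Ga) (rule E_ins[OF abne hd1])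
  then have E1: "E (a @ ys) = M'" using EG by (metis add_right_cancel)
  have hd2: "hd (a @ ys) = hd G"
  proof (cases a)
    case Nil
    then have "xs = [p]" using a_def p xsne by (metis append_butlast_last_id append_Nil)
    then have "hd G = p" using hdG by simp
    moreover have "hd (a @ ys) = p" using hd1 Nil by simp
    ultimately show ?thesis by simp
  next
    case (Cons a0 a')
    then show ?thesis using hdb hdG by simp
  qed
  show ?thesis using Ga abne hd1 E1 hd2 by blast
qed


definition S :: "'a \<Rightarrow> ('a \<times> 'a) multiset \<Rightarrow> 'a list set" where
  "S r M = {G. G \<noteq> [] \<and> hd G = r \<and> E G = M}"

lemma finite_S: "finite (S r M)"
proof (rule finite_subset)
  show "S r M \<subseteq> {xs. set xs \<subseteq> fst ` set_mset M \<and> length xs = size M}"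
  proof
    fix G assume "G \<in> S r M"
    then have EG: "E G = M" by (simp add: S_def)
    have "set G = set_mset (image_mset fst (E G))" by (simp add: fst_E)
    moreover have "length G = size (E G)" by (simp add: size_E)
    ultimately show "G \<in> {xs. set xs \<subseteq> fst ` set_mset M \<and> length xs = size M}"
      using EG by simp
  qed
  show "finite {xs. set xs \<subseteq> fst ` set_mset M \<and> length xs = size M}"
    by (rule finite_lists_length_eq) simp
qed

definition ins :: "'a \<Rightarrow> 'a \<Rightarrow> 'a list \<times> nat \<Rightarrow> 'a list" where
  "ins p w = (\<lambda>(G', j). take j G' @ p # w # drop j G')"

lemma count_step:
  assumes M: "M = M' + {#(p,w),(w,p)#}" and mM': "image_mset fst M' = mset T'"
    and wT': "w \<notin> set T'" and pT: "p \<in> set T'" and r: "r \<in> set T'"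
  shows "card (S r M) = card (S r M') * (count (mset T') p + (if p = r then 1 else 0))"
proof -
  define J where "J = (\<lambda>G'::'a list. {j. j < length G' \<and> G' ! j = p} \<union> (if p = r then {length G'} else {}))"
  have T'ne: "T' \<noteq> []" using r by auto
  have pw: "p \<noteq> w" using pT wT' by auto
  have rw: "r \<noteq> w" using r wT' by auto
  have msetS': "mset G' = mset T'" if "G' \<in> S r M'" for G'
    using that mM' fst_E[of G'] by (simp add: S_def)
  have cardJ: "card (J G') = count (mset T') p + (if p = r then 1 else 0)" if "G' \<in> S r M'" for G'
  proof -
    have "card {j. j < length G' \<and> G' ! j = p} = count (mset G') p"
      by (simp add: count_mset count_list_eq_length_filter length_filter_conv_card eq_commute)
    moreover have "finite {j. j < length G' \<and> G' ! j = p}" by simp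
    moreover have "length G' \<notin> {j. j < length G' \<and> G' ! j = p}" by simp
    ultimately show ?thesis using msetS'[OF that] unfolding J_def by (auto simp: card_insert_if)
  qed
  have finJ: "finite (J G')" for G' unfolding J_def by simp
  have img: "S r M = ins p w ` (SIGMA G':S r M'. J G')"
  proof
    show "ins p w ` (SIGMA G':S r M'. J G') \<subseteq> S r M"
    proof clarify
      fix G' j assume G': "G' \<in> S r M'" and j: "j \<in> J G'"
      have G'ne: "G' \<noteq> []" and hdG': "hd G' = r" and EG': "E G' = M'" using G' by (auto simp: S_def)
      define a where "a = take j G'"
      define b where "b = drop j G'"
      have ab: "a @ b \<noteq> []" using G'ne by (simp add: a_def b_def)
      have hba: "hd (b @ a) = p"
      proof (cases "j < length G'")
        case True
        then have "G' ! j = p" using j unfolding J_def by (auto split: if_splits)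
        then show ?thesis using True by (simp add: b_def hd_drop_conv_nth)
      next
        case False
        then have "j = length G'" "p = r" using j unfolding J_def by (auto split: if_splits)
        then show ?thesis using hdG' G'ne by (simp add: a_def b_def)
      qed
      have "E (ins p w (G', j)) = M"
        using E_ins[OF ab hba] EG' M by (simp add: ins_def a_def b_def)
      moreover have "hd (ins p w (G', j)) = r"
      proof (cases j)
        case 0
        then have "G' ! 0 = p" using j G'ne unfolding J_def by (auto split: if_splits)
        then have "p = r" using hdG' G'ne by (simp add: hd_conv_nth)
        then show ?thesis using 0 by (simp add: ins_def)
      next
        case (Suc k)
        then show ?thesis using hdG' G'ne by (cases G') (auto simp: ins_def)
      qed
      ultimately show "ins p w (G', j) \<in> S r M" by (simp add: S_def ins_def)
    qed
  next
    show "S r M \<subseteq> ins p w ` (SIGMA G':S r M'. J G')"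
    proof
      fix G assume G: "G \<in> S r M"
      have Gne: "G \<noteq> []" and hdG: "hd G = r" and EG: "E G = M" using G by (auto simp: S_def)
      have "mset G = image_mset fst M" using EG fst_E[of G] by simp
      then have mG: "mset G = mset T' + {#p, w#}" using M mM' by simp
      have cw: "count (mset G) w = 1" using mG wT' pw by (simp add: count_mset_0_iff)
      have "length G = size M" using EG size_E[of G] by simp
      also have "\<dots> = size M' + 2" using M by simp
      also have "size M' = length T'" using mM' by (metis size_image_mset size_mset)
      finally have len: "length G \<ge> 3" using T'ne by (cases T') auto
      have hw: "hd G \<noteq> w" using hdG rw by simp
      obtain a b where ab: "G = a @ p # w # b \<and> a @ b \<noteq> [] \<and> hd (b @ a) = p \<and> E (a @ b) = M' \<and> hd (a @ b) = hd G"
        using remove_leaf[OF EG[unfolded M] cw hw len] by blast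
      have ab1: "G = a @ p # w # b" and ab2: "a @ b \<noteq> []" and ab3: "hd (b @ a) = p"
        and ab4: "E (a @ b) = M'" and ab5: "hd (a @ b) = r" using ab hdG by auto
      have inS: "a @ b \<in> S r M'" using ab2 ab4 ab5 by (simp add: S_def)
      have inJ: "length a \<in> J (a @ b)"
      proof (cases b)
        case Nil
        then have "hd a = p" "hd a = r" using ab3 ab5 by auto
        then show ?thesis using Nil unfolding J_def by auto
      next
        case (Cons b0 b')
        then show ?thesis using ab3 unfolding J_def by auto
      qed
      have "G = ins p w (a @ b, length a)" using ab1 by (simp add: ins_def)
      then show "G \<in> ins p w ` (SIGMA G':S r M'. J G')" using inS inJ by blast
    qed
  qed
  have inj: "inj_on (ins p w) (SIGMA G':S r M'. J G')"
  proof (rule inj_onI, clarify)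
    fix G1 j1 G2 j2
    assume G1: "G1 \<in> S r M'" and j1: "j1 \<in> J G1" and G2: "G2 \<in> S r M'" and j2: "j2 \<in> J G2"
      and eq: "ins p w (G1, j1) = ins p w (G2, j2)"
    have "set G1 = set T'" using msetS'[OF G1] by (metis set_mset_mset)
    then have w1: "w \<notin> set G1" using wT' by simp
    have "set G2 = set T'" using msetS'[OF G2] by (metis set_mset_mset)
    then have w2: "w \<notin> set G2" using wT' by simp
    have l1: "j1 \<le> length G1" using j1 unfolding J_def by (auto split: if_splits)
    have l2: "j2 \<le> length G2" using j2 unfolding J_def by (auto split: if_splits)
    have e: "(take j1 G1 @ [p]) @ w # drop j1 G1 = (take j2 G2 @ [p]) @ w # drop j2 G2"
      using eq by (simp add: ins_def)
    have n1: "w \<notin> set (take j1 G1 @ [p])" using w1 pw by (auto dest: in_set_takeD)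
    have n2: "w \<notin> set (drop j1 G1)" using w1 by (auto dest: in_set_dropD)
    have "take j1 G1 @ [p] = take j2 G2 @ [p] \<and> drop j1 G1 = drop j2 G2"
      using append_Cons_eq_iff[OF n1 n2, of "take j2 G2 @ [p]" "drop j2 G2"] e by simp
    then have t: "take j1 G1 = take j2 G2" and d: "drop j1 G1 = drop j2 G2" by auto
    have "G1 = take j1 G1 @ drop j1 G1" by simp
    also have "\<dots> = G2" using t d by simp
    finally have "G1 = G2" .
    moreover have "j1 = j2"
    proof -
      have "j1 = length (take j1 G1)" using l1 by simp
      also have "\<dots> = length (take j2 G2)" using t by simp
      also have "\<dots> = j2" using l2 by simp
      finally show ?thesis .
    qed
    ultimately 
    show "G1 = G2 \<and> j1 = j2" by simp
  qed
  have "card (S r M) = card (SIGMA G':S r M'. J G')" unfolding img by (rule card_image[OF inj])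
  also have "\<dots> = (\<Sum>G'\<in>S r M'. card (J G'))" by (rule card_SigmaI) (simp_all add: finite_S finJ)
  also have "\<dots> = (\<Sum>G'\<in>S r M'. count (mset T') p + (if p = r then 1 else 0))"
    by (rule sum.cong) (simp_all add: cardJ)
  also have "\<dots> = card (S r M') * (count (mset T') p + (if p = r then 1 else 0))" by simp
  finally show ?thesis .
qed


definition tinv :: "'a list \<Rightarrow> bool" where
  "tinv T \<longleftrightarrow> T \<noteq> [] \<and> length T = 2 * (card (set T) - 1) \<and>
     (\<forall>u v. count (E T) (u,v) = count (E T) (v,u))"

lemma in_E_set: "(u, v) \<in># E G \<Longrightarrow> u \<in> set G \<and> v \<in> set G"
proof -
  assume h: "(u, v) \<in># E G"
  have "u \<in># image_mset fst (E G)" using h by force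
  moreover have "v \<in># image_mset snd (E G)" using h by force
  ultimately show ?thesis by (simp add: fst_E snd_E)
qed

lemma leaf_step:
  assumes inv: "tinv T" and len: "length T \<ge> 4" and cw: "count (mset T) w = 1"
  shows "\<exists>T' p. tinv T' \<and> length T' < length T \<and> E T = E T' + {#(p,w),(w,p)#} \<and>
     w \<notin> set T' \<and> p \<in> set T' \<and> set T = insert w (set T') \<and> mset T = mset T' + {#p,w#}"
proof -
  have Tne: "T \<noteq> []" using len by auto
  have sym: "\<And>u v. count (E T) (u,v) = count (E T) (v,u)" using inv by (simp add: tinv_def)
  define T1 where "T1 = (if hd T = w then rotate1 T else T)"
  have ET1: "E T1 = E T" by (simp add: T1_def E_rotate1)
  have mT1: "mset T1 = mset T" by (simp add: T1_def)
  have lT1: "length T1 = length T" by (simp add: T1_def)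
  have hT1: "hd T1 \<noteq> w"
  proof (cases "hd T = w")
    case True
    then obtain t where t: "T = w # t" using Tne by (cases T) auto
    then have "w \<notin> set t" using cw by (simp add: count_mset_0_iff)
    moreover have "t \<noteq> []" using t len by auto
    ultimately show ?thesis using True t by (simp add: T1_def) (metis list.set_sel(1))
  next
    case False
    then show ?thesis by (simp add: T1_def)
  qed
  have cw1: "count (mset T1) w = 1" using cw mT1 by simp
  have "w \<in> set T1" using cw1 by (metis count_mset_0_iff one_neq_zero set_mset_mset)
  then obtain xs ys where G: "T1 = xs @ w # ys" and wxs: "w \<notin> set xs"
    using split_list_first by metis
  have xsne: "xs \<noteq> []" using hT1 G by auto
  have hdG: "hd T1 = hd xs" using G xsne by simp
  obtain q rest where qr: "ys @ [hd xs] = q # rest" by (cases "ys @ [hd xs]") auto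
  have EG2: "E T1 = cp (xs @ [w]) + cp (w # ys @ [hd xs])"
  proof -
    have "E T1 = cp (xs @ w # ys @ [hd xs])" using G hdG E_nonempty[of T1] by simp
    then show ?thesis using cp_split[of xs w "ys @ [hd xs]"] by simp
  qed
  define p where "p = last xs"
  have pw: "p \<noteq> w" using wxs xsne unfolding p_def by (metis last_in_set)
  have xs_eq: "xs @ [w] = butlast xs @ last xs # [w]" using xsne by simp
  have "cp (xs @ [w]) = cp (butlast xs @ [last xs]) + cp [last xs, w]"
    unfolding xs_eq by (rule cp_split)
  moreover have "(last xs, w) \<in># cp [last xs, w]" by (simp add: cp_def)
  ultimately have e1: "(p, w) \<in># E T1" using EG2 by (simp add: p_def)
  have "(w, q) \<in># cp (w # q # rest)" by (simp add: cp_def)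
  then have e2: "(w, q) \<in># E T1" using EG2 qr by simp
  have e3: "(w, p) \<in># E T1" using e1 sym ET1 by (metis count_eq_zero_iff)
  have cf: "count (image_mset fst (E T1)) w = 1" using cw1 by (simp add: fst_E)
  have sub: "{#(p,w),(w,p)#} \<subseteq># E T1"
  proof -
    obtain M1 where M1: "E T1 = add_mset (p,w) M1" by (metis insert_DiffM e1)
    have "(w,p) \<in># M1" using e3 M1 pw by auto
    then obtain M2 where "M1 = add_mset (w,p) M2" by (metis insert_DiffM)
    then show ?thesis using M1 by simp
  qed
  define M' where "M' = E T1 - {#(p,w),(w,p)#}"
  have EM: "E T1 = M' + {#(p,w),(w,p)#}" unfolding M'_def by (rule subset_mset.diff_add[OF sub, symmetric])
  have len3: "length T1 \<ge> 3" using lT1 len by simp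
  obtain a b where ab: "T1 = a @ p # w # b \<and> a @ b \<noteq> [] \<and> hd (b @ a) = p \<and> E (a @ b) = M' \<and> hd (a @ b) = hd T1"
    using remove_leaf[OF EM cw1 hT1 len3] by blast
  define T' where "T' = a @ b"
  have T'ne: "T' \<noteq> []" using ab by (simp add: T'_def)
  have ET: "E T = E T' + {#(p,w),(w,p)#}" using ab EM ET1 by (simp add: T'_def)
  have mT: "mset T = mset T' + {#p,w#}"
  proof -
    have "mset T = image_mset fst (E T)" by (simp add: fst_E)
    also have "\<dots> = mset T' + {#p,w#}" using ET by (simp add: fst_E)
    finally show ?thesis .
  qed
  have wT': "w \<notin> set T'"
  proof -
    have "count (mset T') w = 0" using mT cw pw by simp
    then show ?thesis by (simp add: count_mset_0_iff)
  qed
  have pT': "p \<in> set T'"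
  proof -
    have "b @ a \<noteq> []" using ab by auto
    then have "p \<in> set (b @ a)" using ab by (metis list.set_sel(1))
    then show ?thesis by (auto simp: T'_def)
  qed
  have "set T = set_mset (mset T)" by simp
  also have "\<dots> = set_mset (mset T' + {#p,w#})" using mT by simp
  finally have setT: "set T = insert w (set T')" using pT' by auto
  have "size (mset T) = size (mset T' + {#p,w#})" using mT by simp
  then have lenT': "length T = length T' + 2" by simp
  have cardT': "card (set T) = Suc (card (set T'))" using setT wT' by simp
  have lT: "length T = 2 * (card (set T) - 1)" using inv by (simp add: tinv_def)
  have lT': "length T' = 2 * (card (set T') - 1)"
    using lT lenT' cardT' T'ne by (cases "card (set T')") auto
  have symT': "count (E T') (u,v) = count (E T') (v,u)" for u v
  proof -
    have c1: "count (E T) (u,v) = count (E T') (u,v) + count {#(p,w),(w,p)#} (u,v)"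
      using ET by (simp only: count_union)
    have c2: "count (E T) (v,u) = count (E T') (v,u) + count {#(p,w),(w,p)#} (v,u)"
      using ET by (simp only: count_union)
    have c3: "count {#(p,w),(w,p)#} (u,v) = count {#(p,w),(w,p)#} (v,u)"
      by (cases "u = p"; cases "v = w"; cases "u = w"; cases "v = p") simp_all
    show ?thesis using c1 c2 c3 sym[of u v] by linarith
  qed
  have "tinv T'" using T'ne lT' symT' by (simp add: tinv_def)
  moreover have "length T' < length T" using lenT' by simp
  ultimately show ?thesis using ET wT' pT' setT mT by blast
qed



lemma two_leaves:
  assumes "tinv T"
  shows "2 \<le> card {v \<in> set T. count (mset T) v = 1}"
proof -
  define A where "A = set T"
  define L where "L = {v \<in> A. count (mset T) v = 1}"
  have Tne: "T \<noteq> []" and lT: "length T = 2 * (card A - 1)"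
    using assms by (auto simp: tinv_def A_def)
  have finA: "finite A" by (simp add: A_def)
  have LA: "L \<subseteq> A" by (auto simp: L_def)
  have "(\<Sum>v\<in>A. count (mset T) v) = (\<Sum>v\<in>A. count_list T v)" by (simp add: count_mset)
  also have "\<dots> = length T" by (rule sum_count_set) (auto simp: A_def)
  finally have s: "(\<Sum>v\<in>A. count (mset T) v) = length T" .
  have "(\<Sum>v\<in>A. count (mset T) v) = (\<Sum>v\<in>A - L. count (mset T) v) + (\<Sum>v\<in>L. count (mset T) v)"
    by (rule sum.subset_diff[OF LA finA])
  moreover have "(\<Sum>v\<in>L. count (mset T) v) = card L" by (simp add: L_def)
  moreover have "(\<Sum>v\<in>A - L. count (mset T) v) \<ge> (\<Sum>v\<in>A - L. 2)"
  proof (rule sum_mono)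
    fix v assume v: "v \<in> A - L"
    then have "count (mset T) v \<noteq> 0" by (simp add: A_def count_mset_0_iff)
    moreover have "count (mset T) v \<noteq> 1" using v by (simp add: L_def)
    ultimately show "2 \<le> count (mset T) v" by linarith
  qed
  moreover have "card (A - L) = card A - card L" using LA finA by (simp add: card_Diff_subset finite_subset)
  moreover have "card L \<le> card A" using LA finA by (simp add: card_mono)
  moreover have "card A \<ge> 1" using Tne finA by (simp add: A_def Suc_le_eq card_gt_0_iff)
  ultimately have "card L + 2 * (card A - card L) \<le> 2 * (card A - 1)" using s lT by simp
  then have "2 \<le> card L" using \<open>card L \<le> card A\<close> \<open>card A \<ge> 1\<close> by linarith
  then show ?thesis by (simp add: L_def A_def)
qed

lemma two_cases: "count {#(a,b),(b,a)#} (u,v) = (if (u,v) = (a,b) then 1 else 0) + (if (u,v) = (b,a) then 1 else 0)"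
  by (cases "u = a"; cases "v = b"; cases "u = b"; cases "v = a") simp_all

lemma two_le1: "a \<noteq> b \<Longrightarrow> count {#(a,b),(b,a)#} (u,v) \<le> 1"
  by (cases "u = a"; cases "v = b"; cases "u = b"; cases "v = a") simp_all

lemma two_noloop: "a \<noteq> b \<Longrightarrow> count {#(a,b),(b,a)#} (u,u) = 0"
  by (cases "u = a"; cases "u = b") simp_all

lemma two_zero: "u \<noteq> w \<Longrightarrow> v \<noteq> w \<Longrightarrow> count {#(p,w),(w,p)#} (u,v) = 0"
  by simp

lemma E_two: "E [a,b] = {#(a,b),(b,a)#}"
  by (simp add: E_def)

lemma S_two:
  assumes ab: "a \<noteq> b"
  shows "S a {#(a,b),(b,a)#} = {[a,b]}"
proof
  show "{[a,b]} \<subseteq> S a {#(a,b),(b,a)#}" by (simp add: S_def E_two)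
  show "S a {#(a,b),(b,a)#} \<subseteq> {[a,b]}"
  proof
    fix G assume G: "G \<in> S a {#(a,b),(b,a)#}"
    then have EG: "E G = {#(a,b),(b,a)#}" and hG: "hd G = a" and Gne: "G \<noteq> []" by (auto simp: S_def)
    have "length G = 2" using size_E[of G] EG by simp
    then obtain x y where xy: "G = [x,y]"
      by (metis One_nat_def Suc_1 length_0_conv length_Suc_conv)
    then have x: "x = a" using hG by simp
    have "count (E G) (a,y) \<ge> 1" using xy x E_two[of a y] two_cases[of a y a y] by simp
    then have "count {#(a,b),(b,a)#} (a,y) \<ge> 1" using EG by simp
    then have "y = b" using ab two_cases[of a b a y] by (auto split: if_splits)
    then show "G \<in> {[a,b]}" using xy x by simp
  qed
qed


lemma main:
  "tinv T \<Longrightarrow> (\<forall>r\<in>set T. card (S r (E T)) = count (mset T) r * (\<Prod>v\<in>set T. fact (count (mset T) v - 1)))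
     \<and> (\<forall>u v. count (E T) (u,v) \<le> 1) \<and> (\<forall>u. count (E T) (u,u) = 0)"
proof (induction "length T" arbitrary: T rule: less_induct)
  case less
  have inv: "tinv T" by fact
  then have Tne: "T \<noteq> []" and lT: "length T = 2 * (card (set T) - 1)"
    by (auto simp: tinv_def)
  have c1: "card (set T) \<ge> 1" using Tne by (simp add: Suc_le_eq card_gt_0_iff)
  show ?case
  proof (cases "length T = 2")
    case True
    then obtain a b where T: "T = [a,b]"
      by (metis One_nat_def Suc_1 length_0_conv length_Suc_conv)
    have "card (set T) = 2" using lT True by simp
    then have ab: "a \<noteq> b" using T by (cases "a = b") auto
    have ET: "E T = {#(a,b),(b,a)#}" using T by (simp add: E_two)
    have ET': "E T = {#(b,a),(a,b)#}" unfolding ET by (rule add_mset_commute)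
    have ca: "count (mset T) a = 1" unfolding T using ab by simp
    have cb: "count (mset T) b = 1" unfolding T using ab by simp
    have P: "(\<Prod>v\<in>set T. fact (count (mset T) v - 1)) = (1::nat)"
      unfolding T using ab by simp
    have p1: "\<forall>r\<in>set T. card (S r (E T)) = count (mset T) r * (\<Prod>v\<in>set T. fact (count (mset T) v - 1))"
    proof
      fix r assume "r \<in> set T"
      then have "r = a \<or> r = b" using T by auto
      then show "card (S r (E T)) = count (mset T) r * (\<Prod>v\<in>set T. fact (count (mset T) v - 1))"
      proof
        assume "r = a" then show ?thesis using S_two[OF ab] ET ca P by simp
      next
        assume "r = b" then show ?thesis using S_two[of b a] ab ET' cb P by simp
      qed
    qed
    have p2: "\<forall>u v. count (E T) (u,v) \<le> 1"
    proof (intro allI)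
      fix u v show "count (E T) (u,v) \<le> 1" unfolding ET by (rule two_le1[OF ab])
    qed
    have p3: "\<forall>u. count (E T) (u,u) = 0"
    proof
      fix u show "count (E T) (u,u) = 0" unfolding ET by (rule two_noloop[OF ab])
    qed
    show ?thesis using p1 p2 p3 by blast
  next
    case False
    have "card (set T) \<noteq> 2" using False lT by auto
    moreover have "card (set T) \<noteq> 1" using lT Tne by auto
    ultimately have len4: "length T \<ge> 4" using lT c1 by linarith
    define L where "L = {v \<in> set T. count (mset T) v = 1}"
    have L2: "2 \<le> card L" using two_leaves[OF inv] by (simp add: L_def)
    have finL: "finite L" by (simp add: L_def)
    have other: "\<exists>w\<in>L. w \<noteq> r" for r
    proof (rule ccontr)
      assume "\<not> (\<exists>w\<in>L. w \<noteq> r)"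
      then have "L \<subseteq> {r}" by auto
      then have "card L \<le> card {r}" by (intro card_mono) simp_all
      then show False using L2 by simp
    qed
    have step: "\<exists>T' p. tinv T' \<and> length T' < length T \<and> E T = E T' + {#(p,w),(w,p)#} \<and>
       w \<notin> set T' \<and> p \<in> set T' \<and> set T = insert w (set T') \<and> mset T = mset T' + {#p,w#}"
      if "w \<in> L" for w
      using leaf_step[OF inv len4] that by (simp add: L_def)
    obtain w0 where "w0 \<in> L" using other by blast
    then obtain T0 p0 where T0: "tinv T0" "length T0 < length T" "E T = E T0 + {#(p0,w0),(w0,p0)#}"
       "w0 \<notin> set T0" "p0 \<in> set T0"
      using step by blast
    have IH0: "(\<forall>u v. count (E T0) (u,v) \<le> 1) \<and> (\<forall>u. count (E T0) (u,u) = 0)"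
      using less.hyps[OF T0(2) T0(1)] by blast
    have pw0: "p0 \<noteq> w0" using T0 by auto
    have cE: "count (E T) x = count (E T0) x + count {#(p0,w0),(w0,p0)#} x" for x
      using T0(3) by (simp only: count_union)
    have p2: "\<forall>u v. count (E T) (u,v) \<le> 1"
    proof (intro allI)
      fix u v
      show "count (E T) (u,v) \<le> 1"
      proof (cases "u = w0 \<or> v = w0")
        case True
        then have "(u,v) \<notin># E T0" using in_E_set[of u v T0] T0(4) by auto
        then have "count (E T0) (u,v) = 0" by (simp add: count_eq_zero_iff)
        moreover have "count {#(p0,w0),(w0,p0)#} (u,v) \<le> 1"
          using pw0 by (rule two_le1)
        ultimately show ?thesis using cE[of "(u,v)"] by simp
      next
        case False
        then have "count {#(p0,w0),(w0,p0)#} (u,v) = 0" by (intro two_zero) auto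
        then show ?thesis using cE[of "(u,v)"] IH0 by simp
      qed
    qed
    have p3: "\<forall>u. count (E T) (u,u) = 0"
    proof
      fix u
      have "count {#(p0,w0),(w0,p0)#} (u,u) = 0" using pw0 by (rule two_noloop)
      then show "count (E T) (u,u) = 0" using cE[of "(u,u)"] IH0 by simp
    qed
    have p1: "\<forall>r\<in>set T. card (S r (E T)) = count (mset T) r * (\<Prod>v\<in>set T. fact (count (mset T) v - 1))"
    proof
      fix r assume r: "r \<in> set T"
      obtain w where w: "w \<in> L" "w \<noteq> r" using other by blast
      then obtain T' p where T': "tinv T'" "length T' < length T" "E T = E T' + {#(p,w),(w,p)#}"
         "w \<notin> set T'" "p \<in> set T'" "set T = insert w (set T')" "mset T = mset T' + {#p,w#}"
        using step by blast
      have pw: "p \<noteq> w" using T' by auto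
      have rT': "r \<in> set T'" using r w T'(6) by auto
      define c where "c = count (mset T)"
      define c' where "c' = count (mset T')"
      have cc: "c v = c' v + (if v = p then 1 else 0) + (if v = w then 1 else 0)" for v
        using T'(7) by (simp add: c_def c'_def)
      have c'w: "c' w = 0" using T'(4) by (simp add: c'_def count_mset_0_iff)
      have cw: "c w = 1" using cc[of w] c'w pw by simp
      have c'p: "c' p \<ge> 1" using T'(5) by (simp add: c'_def Suc_le_eq count_mset_0_iff[symmetric])
      have IH: "card (S r (E T')) = c' r * (\<Prod>v\<in>set T'. fact (c' v - 1))"
        using less.hyps[OF T'(2) T'(1)] rT' by (simp add: c'_def)
      have CS: "card (S r (E T)) = card (S r (E T')) * (c' p + (if p = r then 1 else 0))"
        unfolding c'_def by (rule count_step[OF T'(3) fst_E T'(4) T'(5) rT'])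
      define Q :: nat where "Q = (\<Prod>v\<in>set T' - {p}. fact (c' v - 1))"
      have P': "(\<Prod>v\<in>set T'. fact (c' v - 1)) = fact (c' p - 1) * Q"
        unfolding Q_def using T'(5) by (simp add: prod.remove)
      have "(\<Prod>v\<in>set T. fact (c v - 1)) = fact (c w - 1) * (\<Prod>v\<in>set T'. fact (c v - 1))"
        using T'(4,6) by simp
      also have "(\<Prod>v\<in>set T'. fact (c v - 1)) = fact (c p - 1) * (\<Prod>v\<in>set T' - {p}. fact (c v - 1))"
        using T'(5) by (simp add: prod.remove)
      also have "(\<Prod>v\<in>set T' - {p}. fact (c v - 1)) = Q"
        unfolding Q_def
      proof (rule prod.cong)
        fix v assume "v \<in> set T' - {p}"
        then have "v \<noteq> p" "v \<noteq> w" using T'(4) by auto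
        then show "fact (c v - 1) = fact (c' v - 1)" using cc[of v] by simp
      qed simp
      also have "c p = c' p + 1" using cc[of p] pw by simp
      finally have P: "(\<Prod>v\<in>set T. fact (c v - 1)) = c' p * (fact (c' p - 1) * Q)"
        using cw c'p fact_reduce[of "c' p", where 'a=nat] by simp
      have cr: "c r = c' r + (if p = r then 1 else 0)" using cc[of r] w(2) by auto
      show "card (S r (E T)) = count (mset T) r * (\<Prod>v\<in>set T. fact (count (mset T) v - 1))"
        unfolding c_def[symmetric] using CS IH P' P cr
        by (cases "p = r") (simp_all add: algebra_simps)
    qed
    show ?thesis using p1 p2 p3 by blast
  qed
qed


lemma bal_sym:
  assumes "balanced G"
  shows "adj G u v = adj G v u"
proof -
  obtain \<sigma> :: "nat \<Rightarrow> nat" where sg: "\<forall>k < length G. \<sigma> k < length G \<and> \<sigma> k \<noteq> k \<and> \<sigma> (\<sigma> k) = k \<and>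
      ehead G k = etail G (\<sigma> k) \<and> etail G k = ehead G (\<sigma> k)"
    using assms unfolding balanced_def by blast
  define A where "A = {k. k < length G \<and> etail G k = u \<and> ehead G k = v}"
  define B where "B = {k. k < length G \<and> etail G k = v \<and> ehead G k = u}"
  have P: "\<sigma> k < length G \<and> \<sigma> (\<sigma> k) = k \<and> ehead G k = etail G (\<sigma> k) \<and> etail G k = ehead G (\<sigma> k)"
    if "k < length G" for k using sg that by blast
  have AB: "\<sigma> k \<in> {k. k < length G \<and> etail G k = y \<and> ehead G k = x}"
    if "k \<in> {k. k < length G \<and> etail G k = x \<and> ehead G k = y}" for k x y
  proof -
    have k: "k < length G" "etail G k = x" "ehead G k = y" using that by auto
    have "\<sigma> k < length G" using P[OF k(1)] by blast
    moreover have "etail G (\<sigma> k) = y" using P[OF k(1)] k(3) by metis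
    moreover have "ehead G (\<sigma> k) = x" using P[OF k(1)] k(2) by metis
    ultimately show ?thesis by blast
  qed
  have inv: "\<sigma> (\<sigma> k) = k" if "k \<in> {k. k < length G \<and> etail G k = x \<and> ehead G k = y}" for k x y
    using P that by blast
  have "bij_betw \<sigma> A B"
  proof (rule bij_betw_byWitness[where f' = \<sigma>])
    show "\<forall>a\<in>A. \<sigma> (\<sigma> a) = a" using inv unfolding A_def by blast
    show "\<forall>a\<in>B. \<sigma> (\<sigma> a) = a" using inv unfolding B_def by blast
    show "\<sigma> ` A \<subseteq> B" using AB unfolding A_def B_def by blast
    show "\<sigma> ` B \<subseteq> A" using AB unfolding A_def B_def by blast
  qed
  then have "card A = card B" by (rule bij_betw_same_card)
  then show ?thesis by (simp add: adj_def A_def B_def)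
qed

lemma bal_from:
  assumes le1: "\<And>u v. adj G u v \<le> 1" and nl: "\<And>u. adj G u u = 0"
    and sy: "\<And>u v. adj G u v = adj G v u"
  shows "balanced G"
proof -
  define R where "R = (\<lambda>k k'. k' < length G \<and> etail G k' = ehead G k \<and> ehead G k' = etail G k)"
  have uniq: "\<exists>!k'. R k k'" if k: "k < length G" for k
  proof -
    define u where "u = etail G k"
    define v where "v = ehead G k"
    define A where "A = {k. k < length G \<and> etail G k = u \<and> ehead G k = v}"
    define B where "B = {k. k < length G \<and> etail G k = v \<and> ehead G k = u}"
    have "k \<in> A" using k by (simp add: A_def u_def v_def)
    moreover have "finite A" by (simp add: A_def)
    ultimately have "card A \<ge> 1" by (metis One_nat_def Suc_leI card_gt_0_iff empty_iff)
    then have "card B \<ge> 1" using sy[of u v] by (simp add: adj_def A_def B_def)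
    moreover have "card B \<le> 1" using le1[of v u] by (simp add: adj_def B_def)
    ultimately have "card B = 1" by simp
    then obtain k' where "B = {k'}" by (metis card_1_singletonE)
    then have "\<forall>x. R k x \<longleftrightarrow> x = k'"
      by (auto simp: R_def B_def u_def v_def set_eq_iff)
    then show ?thesis by (intro ex1I[where a=k']) simp_all
  qed
  define \<sigma> where "\<sigma> = (\<lambda>k. THE k'. R k k')"
  have R\<sigma>: "R k (\<sigma> k)" if "k < length G" for k
    unfolding \<sigma>_def using theI'[OF uniq[OF that]] .
  have "\<forall>k < length G. \<sigma> k < length G \<and> \<sigma> k \<noteq> k \<and> \<sigma> (\<sigma> k) = k \<and>
      ehead G k = etail G (\<sigma> k) \<and> etail G k = ehead G (\<sigma> k)"
  proof (intro allI impI)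
    fix k assume k: "k < length G"
    have r: "R k (\<sigma> k)" by (rule R\<sigma>[OF k])
    then have sk: "\<sigma> k < length G" and t: "etail G (\<sigma> k) = ehead G k" and h: "ehead G (\<sigma> k) = etail G k"
      by (auto simp: R_def)
    have "\<sigma> k \<noteq> k"
    proof
      assume eq: "\<sigma> k = k"
      then have "etail G k = ehead G k" using t by simp
      then have "k \<in> {k'. k' < length G \<and> etail G k' = etail G k \<and> ehead G k' = etail G k}" using k by simp
      moreover have "finite {k'. k' < length G \<and> etail G k' = etail G k \<and> ehead G k' = etail G k}" by simp
      ultimately have "card {k'. k' < length G \<and> etail G k' = etail G k \<and> ehead G k' = etail G k} \<noteq> 0"
        using card_0_eq by blast
      then have "adj G (etail G k) (etail G k) \<noteq> 0" unfolding adj_def .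
      then show False using nl[of "etail G k"] by simp
    qed
    moreover have "\<sigma> (\<sigma> k) = k"
    proof -
      have "R (\<sigma> k) (\<sigma> (\<sigma> k))" by (rule R\<sigma>[OF sk])
      moreover have "R (\<sigma> k) k" using k t h by (simp add: R_def)
      ultimately show ?thesis using uniq[OF sk] by blast
    qed
    ultimately show "\<sigma> k < length G \<and> \<sigma> k \<noteq> k \<and> \<sigma> (\<sigma> k) = k \<and>
      ehead G k = etail G (\<sigma> k) \<and> etail G k = ehead G (\<sigma> k)" using sk t h by simp
  qed
  then show ?thesis unfolding balanced_def by blast
qed

theorem lemma3p10:
  fixes l :: nat and T :: "nat list"
  assumes "T \<in> balanced_trees {1..l+1} l"
  shows "card {G \<in> balanced_trees {1..l+1} l. adj G = adj T}
           = 2 * l * (\<Prod>i = 1..l+1. fact (indeg T i - 1))"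
proof -
  define V where "V = {1..l+1}"
  have lT: "length T = 2 * l" and l1: "2 * l \<ge> 1" and sT: "set T = V" and bT: "balanced T"
    using assms by (auto simp: balanced_trees_def circuit_graphs_def is_route_def V_def)
  have Tne: "T \<noteq> []" using lT l1 by auto
  have cV: "card V = l + 1" by (simp add: V_def)
  have symT: "count (E T) (u,v) = count (E T) (v,u)" for u v
    using bal_sym[OF bT, of u v] by (simp add: adj_E)
  have inv: "tinv T" unfolding tinv_def using Tne lT sT cV symT by simp
  note M = main[OF inv]
  have F1: "\<And>r. r \<in> V \<Longrightarrow> card (S r (E T)) = count (mset T) r * (\<Prod>v\<in>V. fact (count (mset T) v - 1))"
    using M sT by blast
  have F2: "\<And>u v. count (E T) (u,v) \<le> 1" using M by blast
  have F3: "\<And>u. count (E T) (u,u) = 0" using M by blast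
  have seteq: "{G \<in> balanced_trees V l. adj G = adj T} = (\<Union>r\<in>V. S r (E T))"
  proof
    show "{G \<in> balanced_trees V l. adj G = adj T} \<subseteq> (\<Union>r\<in>V. S r (E T))"
    proof clarify
      fix G assume G: "G \<in> balanced_trees V l" and aG: "adj G = adj T"
      have lG: "length G = 2 * l" and sG: "set G = V"
        using G by (auto simp: balanced_trees_def circuit_graphs_def is_route_def)
      have Gne: "G \<noteq> []" using lG l1 by auto
      have "E G = E T"
      proof (rule multiset_eqI)
        fix x :: "nat \<times> nat"
        obtain u v where x: "x = (u,v)" by (cases x)
        show "count (E G) x = count (E T) x" using aG unfolding x by (metis adj_E)
      qed
      moreover have "hd G \<in> V" using Gne sG by (metis list.set_sel(1))
      ultimately show "G \<in> (\<Union>r\<in>V. S r (E T))" using Gne by (auto simp: S_def)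
    qed
    show "(\<Union>r\<in>V. S r (E T)) \<subseteq> {G \<in> balanced_trees V l. adj G = adj T}"
    proof clarify
      fix r G assume r: "r \<in> V" and G: "G \<in> S r (E T)"
      have Gne: "G \<noteq> []" and EG: "E G = E T" using G by (auto simp: S_def)
      have aG: "adj G = adj T" using EG by (simp add: adj_E fun_eq_iff)
      have "length G = length T" using EG by (metis size_E)
      then have lG: "length G = 2 * l" using lT by simp
      have "mset G = mset T" using EG by (metis fst_E)
      then have sG: "set G = V" using sT by (metis set_mset_mset)
      have "balanced G"
      proof (rule bal_from)
        fix u v
        show "adj G u v \<le> 1" unfolding adj_E EG by (rule F2)
        show "adj G u u = 0" unfolding adj_E EG by (rule F3)
        show "adj G u v = adj G v u" unfolding adj_E EG by (rule symT)
      qed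
      then have "G \<in> balanced_trees V l"
        using lG sG l1 by (simp add: balanced_trees_def circuit_graphs_def is_route_def)
      then show "G \<in> balanced_trees V l \<and> adj G = adj T" using aG by simp
    qed
  qed
  have "card (\<Union>r\<in>V. S r (E T)) = (\<Sum>r\<in>V. card (S r (E T)))"
  proof (rule card_UN_disjoint)
    show "finite V" by (simp add: V_def)
    show "\<forall>r\<in>V. finite (S r (E T))" by (simp add: finite_S)
    show "\<forall>i\<in>V. \<forall>j\<in>V. i \<noteq> j \<longrightarrow> S i (E T) \<inter> S j (E T) = {}"
      by (auto simp: S_def)
  qed
  also have "\<dots> = (\<Sum>r\<in>V. count (mset T) r * (\<Prod>v\<in>V. fact (count (mset T) v - 1)))"
    by (rule sum.cong) (simp_all add: F1)
  also have "\<dots> = (\<Sum>r\<in>V. count (mset T) r) * (\<Prod>v\<in>V. fact (count (mset T) v - 1))"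
    by (simp add: sum_distrib_right)
  also have "(\<Sum>r\<in>V. count (mset T) r) = length T"
  proof -
    have "(\<Sum>r\<in>V. count (mset T) r) = (\<Sum>r\<in>V. count_list T r)" by (simp add: count_mset)
    also have "\<dots> = length T" by (rule sum_count_set) (simp_all add: sT V_def)
    finally show ?thesis .
  qed
  also have "(\<Prod>v\<in>V. fact (count (mset T) v - 1)) = (\<Prod>i = 1..l+1. fact (indeg T i - 1))"
    by (simp add: V_def indeg_count)
  finally show ?thesis using seteq lT by (simp add: V_def)
qed

end
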